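(* Let $P$ and $P'$ be strictly convex closed polyhedra in $\mathbb{R}^3$ with the same combinatorial structure (with a fixed combinatorial equivalence), such that corresponding faces are affine-equivalent. Suppose there is an edge path $\gamma$ on $P$ such that (i) each vertex of $\gamma$ is incident to exactly three edges of $P$, and (ii) every face of $P$ is incident to at least one vertex of $\gamma$. Then $P$ and $P'$ are affine-equivalent.
   Context: A polyhedron is a connected two-dimensional polyhedral surface in $\mathbb{R}^3$ composed of finitely many convex polygons (its faces). A closed convex polyhedron is strictly convex if none of its dihedral angles equals $\pi$. Two polyhedra have the same combinatorial structure (are combinatorially equivalent) if there is an incidence-preserving bijection between their vertices, edges and faces. Two corresponding polygons (resp. polyhedra) are affine-equivalent if there is a nondegenerate affine map carrying the first onto the second and carrying each vertex, edge (and face) to the corresponding one under the fixed correspondence. An edge path is a sequence of vertices in which consecutive vertices are joined by edges of $P$. *)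

theory Defs
  imports "HOL-Analysis.Analysis"
begin

text \<open>A strictly convex closed polyhedron is represented by the solid convex body K it
bounds: a polytope in R^3 with nonempty interior (aff_dim 3).
Since faces are taken as the genuine faces of the polytope, no dihedral angle equals pi,
i.e. the polyhedron is strictly convex.\<close>

definition closed_convex_polyhedron :: "(real^3) set \<Rightarrow> bool" where
  "closed_convex_polyhedron K \<longleftrightarrow> polytope K \<and> aff_dim K = 3"

definition poly_vertices :: "(real^3) set \<Rightarrow> (real^3) set" where
  "poly_vertices K = {v. {v} face_of K}"

definition poly_edges :: "(real^3) set \<Rightarrow> (real^3) set set" where
  "poly_edges K = {e. e face_of K \<and> aff_dim e = 1}"

definition poly_faces :: "(real^3) set \<Rightarrow> (real^3) set set" where
  "poly_faces K = {F. F face_of K \<and> aff_dim F = 2}"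

definition nondeg_affine :: "(real^3 \<Rightarrow> real^3) \<Rightarrow> bool" where
  "nondeg_affine g \<longleftrightarrow> (\<exists>L c. linear L \<and> bij L \<and> g = (\<lambda>x. L x + c))"

definition comb_equiv ::
  "(real^3) set \<Rightarrow> (real^3) set \<Rightarrow> (real^3 \<Rightarrow> real^3) \<Rightarrow>
   ((real^3) set \<Rightarrow> (real^3) set) \<Rightarrow> ((real^3) set \<Rightarrow> (real^3) set) \<Rightarrow> bool" where
  "comb_equiv K K' fv fe ff \<longleftrightarrow>
     bij_betw fv (poly_vertices K) (poly_vertices K') \<and>
     bij_betw fe (poly_edges K) (poly_edges K') \<and>
     bij_betw ff (poly_faces K) (poly_faces K') \<and>
     (\<forall>v\<in>poly_vertices K. \<forall>e\<in>poly_edges K. v \<in> e \<longleftrightarrow> fv v \<in> fe e) \<and>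
     (\<forall>v\<in>poly_vertices K. \<forall>F\<in>poly_faces K. v \<in> F \<longleftrightarrow> fv v \<in> ff F) \<and>
     (\<forall>e\<in>poly_edges K. \<forall>F\<in>poly_faces K. e \<subseteq> F \<longleftrightarrow> fe e \<subseteq> ff F)"

text \<open>A nondegenerate affine map between
the two planes extends to a nondegenerate affine map of R^3.\<close>
definition faces_affine_equiv ::
  "(real^3) set \<Rightarrow> (real^3 \<Rightarrow> real^3) \<Rightarrow> ((real^3) set \<Rightarrow> (real^3) set) \<Rightarrow>
   (real^3) set \<Rightarrow> (real^3) set \<Rightarrow> bool" where
  "faces_affine_equiv K fv fe F F' \<longleftrightarrow>
     (\<exists>g. nondeg_affine g \<and> g ` F = F' \<and>
        (\<forall>v\<in>poly_vertices K. v \<in> F \<longrightarrow> g v = fv v) \<and>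
        (\<forall>e\<in>poly_edges K. e \<subseteq> F \<longrightarrow> g ` e = fe e))"

definition polys_affine_equiv ::
  "(real^3) set \<Rightarrow> (real^3) set \<Rightarrow> (real^3 \<Rightarrow> real^3) \<Rightarrow>
   ((real^3) set \<Rightarrow> (real^3) set) \<Rightarrow> ((real^3) set \<Rightarrow> (real^3) set) \<Rightarrow> bool" where
  "polys_affine_equiv K K' fv fe ff \<longleftrightarrow>
     (\<exists>g. nondeg_affine g \<and> g ` K = K' \<and>
        (\<forall>v\<in>poly_vertices K. g v = fv v) \<and>
        (\<forall>e\<in>poly_edges K. g ` e = fe e) \<and>
        (\<forall>F\<in>poly_faces K. g ` F = ff F))"

definition edge_path :: "(real^3) set \<Rightarrow> (real^3) list \<Rightarrow> bool" where
  "edge_path K \<gamma> \<longleftrightarrow> \<gamma> \<noteq> [] \<and> set \<gamma> \<subseteq> poly_vertices K \<and>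
     (\<forall>i. Suc i < length \<gamma> \<longrightarrow> closed_segment (\<gamma> ! i) (\<gamma> ! Suc i) \<in> poly_edges K)"

end

theory Submission
  imports Defs
begin


definition aff_map :: "(real^3 \<Rightarrow> real^3) \<Rightarrow> bool" where
  "aff_map G \<longleftrightarrow> (\<exists>L c. linear L \<and> G = (\<lambda>x. L x + c))"

lemma aff_map_comb:
  assumes "aff_map G" "u + w = 1"
  shows "G (u *\<^sub>R x + w *\<^sub>R y) = u *\<^sub>R G x + w *\<^sub>R G y"
proof -
  obtain L c where L: "linear L" "G = (\<lambda>x. L x + c)" using assms(1) aff_map_def by auto
  have "c = u *\<^sub>R c + w *\<^sub>R c" using assms(2) by (metis scaleR_add_left scaleR_one)
  then show ?thesis using L by (simp add: linear_add linear_scale algebra_simps)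
qed

lemma aff_map_agree_hull:
  assumes "aff_map G" "aff_map H" "\<forall>x\<in>S. G x = H x" "x \<in> affine hull S"
  shows "G x = H x"
proof -
  have "affine {x. G x = H x}"
    unfolding affine_def using aff_map_comb[OF assms(1)] aff_map_comb[OF assms(2)] by auto
  then have "affine hull S \<subseteq> {x. G x = H x}" using assms(3) by (intro hull_minimal) auto
  then show ?thesis using assms(4) by auto
qed

lemma nondeg_aff_map: "nondeg_affine g \<Longrightarrow> aff_map g"
  unfolding nondeg_affine_def aff_map_def by blast

lemma ccp_basic:
  assumes "closed_convex_polyhedron K"
  shows "polytope K" "polyhedron K" "convex K" "compact K" "aff_dim K = 3"
  using assms unfolding closed_convex_polyhedron_def
  by (auto simp: polytope_imp_polyhedron polytope_imp_convex polytope_imp_compact)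

lemma two_facets:
  assumes "polyhedron S" "C face_of S" "C \<noteq> {}" "C \<noteq> S" "aff_dim C < aff_dim S - 1"
  shows "\<exists>F1 F2. F1 facet_of S \<and> F2 facet_of S \<and> F1 \<noteq> F2 \<and> C \<subseteq> F1 \<and> C \<subseteq> F2"
proof (rule ccontr)
  assume na: "\<not> ?thesis"
  let ?A = "{F. F facet_of S \<and> C \<subseteq> F}"
  have eq: "C = \<Inter>?A" using face_of_polyhedron assms by blast
  have sub: "\<And>F1 F2. F1 \<in> ?A \<Longrightarrow> F2 \<in> ?A \<Longrightarrow> F1 = F2" using na by blast
  show False
  proof (cases "?A = {}")
    case True
    then have "C = UNIV" using eq by (metis Inter_empty)
    then show False using assms(2,4) face_of_imp_subset by blast
  next
    case False
    then obtain F where F: "F \<in> ?A" by blast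
    then have "?A = {F}" using sub by blast
    then have "C = F" using eq by simp
    then show False using F assms(5) by (simp add: facet_of_def)
  qed
qed

lemma facet_iff:
  assumes "closed_convex_polyhedron K"
  shows "F facet_of K \<longleftrightarrow> F \<in> poly_faces K"
  using ccp_basic[OF assms] unfolding facet_of_def poly_faces_def
  by (auto simp: aff_dim_empty[symmetric])

lemma edge_two_faces:
  assumes "closed_convex_polyhedron K" "e \<in> poly_edges K"
  shows "\<exists>F1 F2. F1 \<in> poly_faces K \<and> F2 \<in> poly_faces K \<and> F1 \<noteq> F2 \<and> e \<subseteq> F1 \<and> e \<subseteq> F2"
proof -
  have e: "e face_of K" "aff_dim e = 1" using assms(2) by (auto simp: poly_edges_def)
  have "e \<noteq> {}" using e(2) by (metis aff_dim_empty one_neq_neg_one)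
  moreover have "e \<noteq> K" using e(2) ccp_basic[OF assms(1)] by auto
  ultimately show ?thesis
    using two_facets[OF ccp_basic(2)[OF assms(1)] e(1)] e(2) ccp_basic[OF assms(1)]
      facet_iff[OF assms(1)] by auto
qed

lemma vertex_two_faces:
  assumes "closed_convex_polyhedron K" "v \<in> poly_vertices K"
  shows "\<exists>F1 F2. F1 \<in> poly_faces K \<and> F2 \<in> poly_faces K \<and> F1 \<noteq> F2 \<and> v \<in> F1 \<and> v \<in> F2"
proof -
  have e: "{v} face_of K" using assms(2) by (auto simp: poly_vertices_def)
  have "{v} \<noteq> K" using ccp_basic[OF assms(1)] by auto
  then show ?thesis
    using two_facets[OF ccp_basic(2)[OF assms(1)] e] ccp_basic[OF assms(1)]
      facet_iff[OF assms(1)] by auto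
qed

lemma face_eq:
  assumes "closed_convex_polyhedron K" "F face_of K"
  shows "F = affine hull F \<inter> K"
  using face_of_imp_eq_affine_Int ccp_basic(3)[OF assms(1)] assms(2) by blast

lemma faces_span:
  assumes "closed_convex_polyhedron K" "F1 \<in> poly_faces K" "F2 \<in> poly_faces K" "F1 \<noteq> F2"
  shows "affine hull (F1 \<union> F2) = UNIV"
proof (rule ccontr)
  assume na: "affine hull (F1 \<union> F2) \<noteq> UNIV"
  have d1: "aff_dim F1 = 2" "aff_dim F2 = 2" using assms by (auto simp: poly_faces_def)
  have "aff_dim (F1 \<union> F2) \<noteq> 3" using na aff_dim_eq_full[of "F1 \<union> F2"] by simp
  moreover have "aff_dim (F1 \<union> F2) \<le> 3" using aff_dim_le_DIM[of "F1 \<union> F2"] by simp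
  moreover have "aff_dim F1 \<le> aff_dim (F1 \<union> F2)" "aff_dim F2 \<le> aff_dim (F1 \<union> F2)"
    by (auto intro: aff_dim_subset)
  ultimately have "aff_dim F1 = aff_dim (F1 \<union> F2)" "aff_dim F2 = aff_dim (F1 \<union> F2)"
    using d1 by auto
  then have "affine hull F1 = affine hull (F1 \<union> F2)" "affine hull F2 = affine hull (F1 \<union> F2)"
    using aff_dim_eq_full_gen by (metis Un_upper1, metis Un_upper2)
  then have "affine hull F1 = affine hull F2" by simp
  then have "F1 = F2" using face_eq[OF assms(1)] assms(2,3) by (metis poly_faces_def mem_Collect_eq)
  then show False using assms(4) by simp
qed

lemma edge_seg:
  assumes "closed_convex_polyhedron K" "e \<in> poly_edges K" "v \<in> poly_vertices K" "v \<in> e"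
  shows "\<exists>w\<in>poly_vertices K. w \<noteq> v \<and> e = closed_segment v w"
proof -
  have e: "e face_of K" "aff_dim e = 1" using assms(2) by (auto simp: poly_edges_def)
  have ce: "compact e" "convex e" using e ccp_basic[OF assms(1)]
    by (auto intro: face_of_imp_compact face_of_imp_convex)
  have "collinear e" using e(2) by (simp add: collinear_aff_dim)
  then obtain a b where ab: "e = closed_segment a b"
    using compact_convex_collinear_segment[of e] ce assms(4) convex_connected by blast
  have "{v} face_of e" using assms(3,4) e(1) face_of_subset face_of_imp_subset
    by (metis empty_subsetI insert_subset mem_Collect_eq poly_vertices_def)
  then have "v = a \<or> v = b" using ab face_of_singleton extreme_point_of_segment by metis
  then obtain w where w: "e = closed_segment v w" using ab closed_segment_commute by metis
  have "{w} face_of e" using w face_of_singleton extreme_point_of_segment by metis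
  then have "{w} face_of K" using e(1) face_of_trans by blast
  moreover have "w \<noteq> v" using w e(2) by auto
  ultimately show ?thesis using w by (auto simp: poly_vertices_def)
qed

lemma edge_noncoll:
  assumes "closed_convex_polyhedron K" "e1 \<in> poly_edges K" "e2 \<in> poly_edges K" "e1 \<noteq> e2"
    "e1 = closed_segment v w1" "e2 = closed_segment v w2"
  shows "w2 \<notin> affine hull {v, w1}"
proof
  assume h: "w2 \<in> affine hull {v, w1}"
  have "{v, w2} \<subseteq> affine hull {v, w1}" using h by (auto intro: hull_inc)
  then have "convex hull {v, w2} \<subseteq> affine hull {v, w1}"
    by (intro hull_minimal) (auto intro: affine_imp_convex)
  then have "e2 \<subseteq> affine hull e1" using assms(5,6) by (simp add: segment_convex_hull)
  moreover have "e2 \<subseteq> K" "e1 face_of K" "e2 face_of K" "aff_dim e1 = 1" "aff_dim e2 = 1"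
    using assms(2,3) by (auto simp: poly_edges_def face_of_imp_subset)
  ultimately have "e2 \<subseteq> e1" using face_eq[OF assms(1)] by blast
  then have "e2 face_of e1" using face_of_subset \<open>e2 face_of K\<close> \<open>e1 face_of K\<close> face_of_imp_subset by blast
  then have "aff_dim e2 < aff_dim e1"
    using face_of_aff_dim_lt assms(4) \<open>e1 face_of K\<close> face_of_imp_convex by metis
  then show False using \<open>aff_dim e1 = 1\<close> \<open>aff_dim e2 = 1\<close> by simp
qed

lemma aff3:
  fixes v w1 w2 :: "real^3"
  assumes "w1 \<noteq> v" "w2 \<notin> affine hull {v, w1}"
  shows "aff_dim {v, w1, w2} = 2"
proof -
  have "\<not> collinear {v, w1, w2}" using collinear_3_affine_hull assms by metis
  then have "aff_dim {v, w1, w2} > 1" using collinear_aff_dim by (metis not_less)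
  moreover have "card {v, w1, w2} \<le> 3" by (simp add: card_insert_if)
  then have "aff_dim {v, w1, w2} \<le> 2" using aff_dim_le_card[of "{v,w1,w2}"] by simp
  ultimately show ?thesis by simp
qed

lemma face_two_edges:
  assumes "closed_convex_polyhedron K" "F \<in> poly_faces K" "v \<in> poly_vertices K" "v \<in> F"
  shows "\<exists>E1 E2. E1 \<in> poly_edges K \<and> E2 \<in> poly_edges K \<and> E1 \<noteq> E2 \<and> v \<in> E1 \<and> v \<in> E2
     \<and> E1 \<subseteq> F \<and> E2 \<subseteq> F"
proof -
  have F: "F face_of K" "aff_dim F = 2" using assms(2) by (auto simp: poly_faces_def)
  have pF: "polyhedron F" using F(1) ccp_basic[OF assms(1)]
    by (metis face_of_polytope_polytope polytope_imp_polyhedron)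
  have vF: "{v} face_of F" using assms(3,4) F(1) face_of_subset face_of_imp_subset
    by (metis empty_subsetI insert_subset mem_Collect_eq poly_vertices_def)
  have "{v} \<noteq> F" using F(2) by auto
  then obtain E1 E2 where E: "E1 facet_of F" "E2 facet_of F" "E1 \<noteq> E2" "{v} \<subseteq> E1" "{v} \<subseteq> E2"
    using two_facets[OF pF vF] F(2) by auto
  have "E1 \<in> poly_edges K" "E2 \<in> poly_edges K" using E(1,2) F
    by (auto simp: facet_of_def poly_edges_def intro: face_of_trans)
  moreover have "E1 \<subseteq> F" "E2 \<subseteq> F" using E(1,2) by (auto simp: facet_of_def face_of_imp_subset)
  ultimately show ?thesis using E by blast
qed



lemma simple_vertex_map:
  assumes K: "closed_convex_polyhedron K" and v: "v \<in> poly_vertices K"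
    and c3: "card {e\<in>poly_edges K. v \<in> e} = 3"
    and g: "\<forall>F\<in>poly_faces K. aff_map (g F) \<and> (\<forall>u\<in>poly_vertices K. u \<in> F \<longrightarrow> g F u = fv u)"
  shows "\<exists>G. aff_map G \<and> (\<forall>F\<in>poly_faces K. v \<in> F \<longrightarrow> (\<forall>x\<in>F. G x = g F x))"
proof -
  obtain e1 e2 e3 where E: "{e\<in>poly_edges K. v \<in> e} = {e1,e2,e3}" "e1\<noteq>e2" "e2\<noteq>e3" "e1\<noteq>e3"
    using c3 card_3_iff by metis
  have ee: "e1 \<in> poly_edges K" "v \<in> e1" "e2 \<in> poly_edges K" "v \<in> e2" "e3 \<in> poly_edges K" "v \<in> e3"
    using E(1) by blast+
  obtain w1 where w1: "w1 \<in> poly_vertices K" "w1 \<noteq> v" "e1 = closed_segment v w1"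
    using edge_seg[OF K ee(1) v ee(2)] by blast
  obtain w2 where w2: "w2 \<in> poly_vertices K" "w2 \<noteq> v" "e2 = closed_segment v w2"
    using edge_seg[OF K ee(3) v ee(4)] by blast
  obtain w3 where w3: "w3 \<in> poly_vertices K" "w3 \<noteq> v" "e3 = closed_segment v w3"
    using edge_seg[OF K ee(5) v ee(6)] by blast
  have a2: "aff_dim {v,w1,w2} = 2" "aff_dim {v,w1,w3} = 2" "aff_dim {v,w2,w3} = 2"
    using aff3[OF w1(2) edge_noncoll[OF K ee(1) ee(3) E(2) w1(3) w2(3)]]
      aff3[OF w1(2) edge_noncoll[OF K ee(1) ee(5) E(4) w1(3) w3(3)]]
      aff3[OF w2(2) edge_noncoll[OF K ee(3) ee(5) E(3) w2(3) w3(3)]] by auto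
  have pair: "\<exists>a b. a \<in> F \<and> b \<in> F \<and> a \<in> {w1,w2,w3} \<and> b \<in> {w1,w2,w3} \<and> aff_dim {v,a,b} = 2"
    if F: "F \<in> poly_faces K" "v \<in> F" for F
  proof -
    obtain E1 E2 where EE: "E1 \<in> poly_edges K" "E2 \<in> poly_edges K" "E1 \<noteq> E2" "v \<in> E1" "v \<in> E2"
      "E1 \<subseteq> F" "E2 \<subseteq> F" using face_two_edges[OF K F(1) v F(2)] by blast
    have Ein: "E1 \<in> {e1,e2,e3}" "E2 \<in> {e1,e2,e3}" using EE E(1) by blast+
    have "w1 \<in> e1" "w2 \<in> e2" "w3 \<in> e3" using w1 w2 w3 by auto
    moreover have "(e1 \<subseteq> F \<and> e2 \<subseteq> F) \<or> (e1 \<subseteq> F \<and> e3 \<subseteq> F) \<or> (e2 \<subseteq> F \<and> e3 \<subseteq> F)"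
      using EE(3,6,7) Ein by blast
    ultimately have "(w1\<in>F \<and> w2\<in>F) \<or> (w1\<in>F \<and> w3\<in>F) \<or> (w2\<in>F \<and> w3\<in>F)"
      by blast
    then show ?thesis using a2 by blast
  qed
  have hullF: "affine hull {v,a,b} = affine hull F"
    if "F \<in> poly_faces K" "v \<in> F" "a \<in> F" "b \<in> F" "aff_dim {v,a,b} = 2" for F a b
  proof -
    have "aff_dim F = 2" using that by (auto simp: poly_faces_def)
    then show ?thesis using aff_dim_eq_full_gen[of "{v,a,b}" F] that by auto
  qed
  have d3: "aff_dim {v,w1,w2,w3} = 3"
  proof (rule ccontr)
    assume "aff_dim {v,w1,w2,w3} \<noteq> 3"
    then have le2: "aff_dim {v,w1,w2,w3} \<le> 2" using aff_dim_le_DIM[of "{v,w1,w2,w3}"] by simp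
    have gen: "affine hull F = affine hull {v,w1,w2,w3}" if Fv: "F \<in> poly_faces K" "v \<in> F" for F
    proof -
      obtain a b where ab: "a \<in> F" "b \<in> F" "a \<in> {w1,w2,w3}" "b \<in> {w1,w2,w3}" "aff_dim {v,a,b} = 2"
        using pair[OF Fv] by blast
      have sub: "{v,a,b} \<subseteq> {v,w1,w2,w3}" using ab by auto
      then have "aff_dim {v,a,b} = aff_dim {v,w1,w2,w3}" using aff_dim_subset[OF sub] ab le2 by simp
      then have "affine hull {v,a,b} = affine hull {v,w1,w2,w3}" using aff_dim_eq_full_gen[OF sub] by simp
      then show ?thesis using hullF[OF Fv ab(1,2,5)] by simp
    qed
    obtain F1 F2 where FF: "F1 \<in> poly_faces K" "F2 \<in> poly_faces K" "F1 \<noteq> F2" "v \<in> F1" "v \<in> F2"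
      using vertex_two_faces[OF K v] by blast
    have "affine hull F1 = affine hull F2" using gen FF by simp
    then have "F1 = F2" using face_eq[OF K] FF(1,2) by (metis poly_faces_def mem_Collect_eq)
    then show False using FF(3) by simp
  qed
  have fin: "finite {v,w1,w2,w3}" by simp
  have "card {v,w1,w2,w3} \<le> 4" using card_length[of "[v,w1,w2,w3]"] by simp
  moreover have "3 \<le> int (card {v,w1,w2,w3}) - 1" using aff_dim_le_card[OF fin] d3 by simp
  ultimately have c4: "card {v,w1,w2,w3} = 4" by simp
  have nad: "\<not> affine_dependent {v,w1,w2,w3}"
    using affine_independent_iff_card[of "{v,w1,w2,w3}"] fin c4 d3 by simp
  have vn: "v \<notin> {w1,w2,w3}" using w1 w2 w3 by auto
  have ind: "independent ((\<lambda>x. -v + x) ` {w1,w2,w3})"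
    using nad affine_dependent_iff_dependent[OF vn] by simp
  obtain L where L: "linear L" "\<forall>y\<in>(\<lambda>x. -v + x) ` {w1,w2,w3}. L y = fv (v + y) - fv v"
    using linear_independent_extend[OF ind, of "\<lambda>y. fv (v + y) - fv v"] by blast
  define G where "G = (\<lambda>x. L x + (fv v - L v))"
  have aG: "aff_map G" unfolding aff_map_def G_def using L(1) by blast
  have Gv: "G v = fv v" by (simp add: G_def)
  have Gw: "G w = fv w" if "w \<in> {w1,w2,w3}" for w
  proof -
    have "L (-v + w) = fv w - fv v" using L(2) that by auto
    moreover have "L (-v + w) = L w - L v" using linear_add[OF L(1), of "-v" w] linear_neg[OF L(1), of v] by simp
    ultimately have "L w - L v = fv w - fv v" by simp
    have "G w = (L w - L v) + fv v" unfolding G_def by (simp add: algebra_simps)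
    also have "\<dots> = fv w" using \<open>L w - L v = fv w - fv v\<close> by simp
    finally show ?thesis .
  qed
  have "\<forall>x\<in>F. G x = g F x" if F: "F \<in> poly_faces K" "v \<in> F" for F
  proof
    fix x assume x: "x \<in> F"
    obtain a b where ab: "a \<in> F" "b \<in> F" "a \<in> {w1,w2,w3}" "b \<in> {w1,w2,w3}" "aff_dim {v,a,b} = 2"
      using pair[OF F] by blast
    have wv: "{w1,w2,w3} \<subseteq> poly_vertices K" using w1 w2 w3 by auto
    have gv: "g F v = fv v" using g F v by blast
    have ga: "g F a = fv a" using g F(1) ab(1,3) wv by blast
    have gb: "g F b = fv b" using g F(1) ab(2,4) wv by blast
    have "\<forall>y\<in>{v,a,b}. G y = g F y"
      using Gv Gw[OF ab(3)] Gw[OF ab(4)] gv ga gb by simp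
    moreover have "x \<in> affine hull {v,a,b}" using hullF[OF F ab(1,2,5)] x by (simp add: hull_inc)
    ultimately show "G x = g F x" using aff_map_agree_hull aG g F by blast
  qed
  then show ?thesis using aG by blast
qed

lemma propagate:
  assumes K: "closed_convex_polyhedron K"
    and g: "\<forall>F\<in>poly_faces K. aff_map (g F)"
    and G: "aff_map G" "\<forall>F\<in>poly_faces K. v \<in> F \<longrightarrow> (\<forall>x\<in>F. G x = g F x)"
    and H: "aff_map H" "\<forall>F\<in>poly_faces K. u \<in> F \<longrightarrow> (\<forall>x\<in>F. H x = g F x)"
    and e: "closed_segment v u \<in> poly_edges K"
  shows "G = H"
proof
  fix x
  obtain F1 F2 where FF: "F1 \<in> poly_faces K" "F2 \<in> poly_faces K" "F1 \<noteq> F2"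
    "closed_segment v u \<subseteq> F1" "closed_segment v u \<subseteq> F2"
    using edge_two_faces[OF K e] by blast
  have "v \<in> F1" "u \<in> F1" "v \<in> F2" "u \<in> F2" using FF ends_in_segment by blast+
  then have "\<forall>y\<in>F1 \<union> F2. G y = H y" using G(2) H(2) FF by auto
  moreover have "x \<in> affine hull (F1 \<union> F2)" using faces_span[OF K FF(1-3)] by simp
  ultimately show "G x = H x" using aff_map_agree_hull G(1) H(1) by blast
qed



theorem theorem5:
  fixes K K' :: "(real^3) set"
    and fv :: "real^3 \<Rightarrow> real^3"
    and fe ff :: "(real^3) set \<Rightarrow> (real^3) set"
    and \<gamma> :: "(real^3) list"
  assumes "closed_convex_polyhedron K" and "closed_convex_polyhedron K'"
    and "comb_equiv K K' fv fe ff"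
    and "\<forall>F\<in>poly_faces K. faces_affine_equiv K fv fe F (ff F)"
    and "edge_path K \<gamma>"
    and "\<forall>v\<in>set \<gamma>. card {e\<in>poly_edges K. v \<in> e} = 3"
    and "\<forall>F\<in>poly_faces K. \<exists>v\<in>set \<gamma>. v \<in> F"
  shows "polys_affine_equiv K K' fv fe ff"
proof -
  note K = assms(1) and K' = assms(2)
  obtain g where g: "\<forall>F\<in>poly_faces K. nondeg_affine (g F) \<and> g F ` F = ff F \<and>
      (\<forall>v\<in>poly_vertices K. v \<in> F \<longrightarrow> g F v = fv v) \<and>
      (\<forall>e\<in>poly_edges K. e \<subseteq> F \<longrightarrow> g F ` e = fe e)"
    using bchoice[OF assms(4)[unfolded faces_affine_equiv_def]] by blast
  have g': "\<forall>F\<in>poly_faces K. aff_map (g F) \<and> (\<forall>u\<in>poly_vertices K. u \<in> F \<longrightarrow> g F u = fv u)"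
  proof
    fix F assume F: "F \<in> poly_faces K"
    then have "nondeg_affine (g F)" "\<forall>u\<in>poly_vertices K. u \<in> F \<longrightarrow> g F u = fv u"
      using g by auto
    then show "aff_map (g F) \<and> (\<forall>u\<in>poly_vertices K. u \<in> F \<longrightarrow> g F u = fv u)"
      using nondeg_aff_map by blast
  qed
  have ga: "\<forall>F\<in>poly_faces K. aff_map (g F)" using g' by blast
  have p1: "\<gamma> \<noteq> []" and p2: "set \<gamma> \<subseteq> poly_vertices K"
    and p3: "\<And>i. Suc i < length \<gamma> \<Longrightarrow> closed_segment (\<gamma> ! i) (\<gamma> ! Suc i) \<in> poly_edges K"
    using assms(5) unfolding edge_path_def by auto
  have simple: "\<exists>G. aff_map G \<and> (\<forall>F\<in>poly_faces K. \<gamma>!i \<in> F \<longrightarrow> (\<forall>x\<in>F. G x = g F x))"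
    if "i < length \<gamma>" for i
  proof -
    have "\<gamma>!i \<in> set \<gamma>" using that by simp
    then show ?thesis using simple_vertex_map[OF K _ _ g'] p2 assms(6) by blast
  qed
  obtain G where G: "aff_map G" "\<forall>F\<in>poly_faces K. \<gamma>!0 \<in> F \<longrightarrow> (\<forall>x\<in>F. G x = g F x)"
    using simple[of 0] p1 by auto
  have all: "\<forall>F\<in>poly_faces K. \<gamma>!i \<in> F \<longrightarrow> (\<forall>x\<in>F. G x = g F x)" if "i < length \<gamma>" for i
    using that
  proof (induction i)
    case 0
    then show ?case using G(2) by simp
  next
    case (Suc i)
    obtain H where H: "aff_map H" "\<forall>F\<in>poly_faces K. \<gamma>!Suc i \<in> F \<longrightarrow> (\<forall>x\<in>F. H x = g F x)"
      using simple[OF Suc.prems] by blast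
    have "G = H" using propagate[OF K ga G(1) Suc.IH H(1) H(2) p3[OF Suc.prems]] Suc.prems by simp
    then show ?case using H(2) by simp
  qed
  have agree: "\<forall>x\<in>F. G x = g F x" if F: "F \<in> poly_faces K" for F
  proof -
    obtain v where v: "v \<in> set \<gamma>" "v \<in> F" using assms(7) F by blast
    then obtain i where "i < length \<gamma>" "\<gamma>!i = v" by (metis in_set_conv_nth)
    then show ?thesis using all F v by blast
  qed
  obtain L c where Lc: "linear L" "G = (\<lambda>x. L x + c)" using G(1) aff_map_def by auto
  have Gv: "G v = fv v" if v: "v \<in> poly_vertices K" for v
  proof -
    obtain F where F: "F \<in> poly_faces K" "v \<in> F" using vertex_two_faces[OF K v] by blast
    then show ?thesis using agree[OF F(1)] g v by auto
  qed
  have Ge: "G ` e = fe e" if e: "e \<in> poly_edges K" for e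
  proof -
    obtain F where F: "F \<in> poly_faces K" "e \<subseteq> F" using edge_two_faces[OF K e] by blast
    then have "G ` e = g F ` e" using agree[OF F(1)] by (auto intro!: image_cong)
    then show ?thesis using g F e by auto
  qed
  have GF: "G ` F = ff F" if F: "F \<in> poly_faces K" for F
  proof -
    have "G ` F = g F ` F" using agree[OF F] by (auto intro!: image_cong)
    then show ?thesis using g F by auto
  qed
  have VK: "K = convex hull (poly_vertices K)"
    using Krein_Milman_Minkowski[of K] ccp_basic[OF K] by (simp add: poly_vertices_def face_of_singleton)
  have VK': "K' = convex hull (poly_vertices K')"
    using Krein_Milman_Minkowski[of K'] ccp_basic[OF K'] by (simp add: poly_vertices_def face_of_singleton)
  have fvV: "fv ` poly_vertices K = poly_vertices K'"
  proof -
    have "bij_betw fv (poly_vertices K) (poly_vertices K')"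
      using assms(3) unfolding comb_equiv_def by (rule conjunct1)
    then show ?thesis by (rule bij_betw_imp_surj_on)
  qed
  have GV: "G ` poly_vertices K = poly_vertices K'"
  proof -
    have "G ` poly_vertices K = fv ` poly_vertices K" by (rule image_cong[OF refl]) (rule Gv)
    then show ?thesis using fvV by simp
  qed
  have img: "G ` S = (+) c ` (L ` S)" for S
    unfolding Lc(2) image_image by (rule image_cong[OF refl]) (rule add.commute)
  have GK: "G ` K = K'"
  proof -
    have "G ` K = (+) c ` (L ` (convex hull (poly_vertices K)))" using VK img by metis
    also have "\<dots> = (+) c ` (convex hull (L ` poly_vertices K))"
      using convex_hull_linear_image[OF Lc(1)] by metis
    also have "\<dots> = convex hull ((+) c ` (L ` poly_vertices K))"
      using convex_hull_translation by metis
    also have "\<dots> = convex hull (G ` poly_vertices K)" using img by metis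
    also have "\<dots> = K'" using GV VK' by simp
    finally show ?thesis .
  qed
  have surjL: "surj L"
  proof (rule ccontr)
    assume ns: "\<not> surj L"
    have sub: "subspace (range L)" using Lc(1) by (simp add: real_vector.linear_subspace_image)
    then have sp: "span (range L) = range L" by (simp add: span_eq_iff)
    have rL: "range L \<noteq> UNIV" using ns by simp
    have "dim (range L) \<noteq> DIM(real^3)" using dim_eq_full[of "range L"] sp rL by metis
    then have "dim (range L) \<noteq> 3" by simp
    moreover have "dim (range L) \<le> 3" using dim_subset_UNIV[of "range L"] by simp
    ultimately have "aff_dim (range L) \<le> 2" using aff_dim_subspace[OF sub] by simp
    moreover have "K' \<subseteq> (+) c ` range L" using GK img by auto
    then have "aff_dim K' \<le> aff_dim ((+) c ` range L)" by (rule aff_dim_subset)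
    ultimately have "aff_dim K' \<le> 2" using aff_dim_translation_eq[of c "range L"] by linarith
    then show False using ccp_basic(5)[OF K'] by simp
  qed
  have "inj L" using linear_surjective_imp_injective[OF Lc(1) surjL] by simp
  then have "nondeg_affine G" unfolding nondeg_affine_def using Lc surjL by (auto simp: bij_def)
  then show ?thesis unfolding polys_affine_equiv_def using GK Gv Ge GF by blast
qed

end
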